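(* If $T$ is the modular tree of a finite graph $X$, then ${\rm Aut}(X)\cong{\rm Aut}(T)$, where ${\rm Aut}(T)$ consists of the automorphisms of $T$ that preserve the types of vertices (normal/marker) and of edges (normal/tree) and the orientation of tree edges.
   Context: A module of a graph $X$ is a set $M\subseteq V(X)$ such that every $x\in V(X)\setminus M$ is adjacent either to all vertices of $M$ or to none. A module is trivial if it equals $V(X)$ or has size $1$; a graph is prime if all its modules are trivial, and degenerate if it is $K_n$ or $\overline{K_n}$. Two disjoint modules are adjacent if all edges between them are present. For a modular partition $\mathcal P=\{M_1,\dots,M_k\}$ of $V(X)$, the quotient $X/\mathcal P$ has vertices $m_1,\dots,m_k$ with $m_im_j$ an edge iff $M_i,M_j$ are adjacent. Modular decomposition: if $X$ is prime or degenerate, stop; if $X$ and $\overline X$ are connected, use the partition into inclusion-maximal proper modules; if $X$ is disconnected (and $\overline X$ connected), use the connected components of $X$; if $\overline X$ is disconnected (and $X$ connected), use the connected components of $\overline X$; recurse on each part. The modular tree $T$ (with normal and marker vertices, normal edges and directed tree edges, and a root node) is defined recursively: if $X$ is prime or degenerate, $T=X$ is its own root node. Otherwise, with $\mathcal P=\{M_1,\dots,M_k\}$ the partition used and $T_i$ the modular tree of $X[M_i]$, $T$ is the disjoint union of the $T_i$ and of the quotient $X/\mathcal P$ (the root node, with marker vertices $m_1,\dots,m_k$); to each $T_i$ a new marker vertex $m_i'$ adjacent exactly to the root node of $T_i$ is added, together with a tree edge oriented from $m_i$ to $m_i'$. *)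

theory Defs
  imports "HOL-Algebra.Group"
begin

text \<open>All notions below are taken in the
 induced subgraph X[M] on a vertex subset M (edges of E between vertices of M).\<close>

definition simple_graph :: "'a set \<Rightarrow> ('a \<times> 'a) set \<Rightarrow> bool" where
  "simple_graph V E \<longleftrightarrow> E \<subseteq> V \<times> V \<and> sym E \<and> irrefl E"

definition is_module :: "('a \<times> 'a) set \<Rightarrow> 'a set \<Rightarrow> 'a set \<Rightarrow> bool" where
  "is_module E M S \<longleftrightarrow> S \<subseteq> M \<and> S \<noteq> {} \<and>
     (\<forall>x\<in>M - S. (\<forall>y\<in>S. (x, y) \<in> E) \<or> (\<forall>y\<in>S. (x, y) \<notin> E))"

definition is_prime :: "('a \<times> 'a) set \<Rightarrow> 'a set \<Rightarrow> bool" where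
  "is_prime E M \<longleftrightarrow> (\<forall>S. is_module E M S \<longrightarrow> S = M \<or> card S = 1)"

definition is_degenerate :: "('a \<times> 'a) set \<Rightarrow> 'a set \<Rightarrow> bool" where
  "is_degenerate E M \<longleftrightarrow>
     (\<forall>x\<in>M. \<forall>y\<in>M. x \<noteq> y \<longrightarrow> (x, y) \<in> E) \<or> (\<forall>x\<in>M. \<forall>y\<in>M. (x, y) \<notin> E)"

definition co_edges :: "('a \<times> 'a) set \<Rightarrow> 'a set \<Rightarrow> ('a \<times> 'a) set" where
  "co_edges E M = {(x, y). x \<in> M \<and> y \<in> M \<and> x \<noteq> y \<and> (x, y) \<notin> E}"

definition components :: "('a \<times> 'a) set \<Rightarrow> 'a set \<Rightarrow> 'a set set" where
  "components E M = {{y \<in> M. (x, y) \<in> (E \<inter> (M \<times> M))\<^sup>*} | x. x \<in> M}"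

definition connected_on :: "('a \<times> 'a) set \<Rightarrow> 'a set \<Rightarrow> bool" where
  "connected_on E M \<longleftrightarrow> components E M = {M}"

text \<open>The modular partition used by the modular decomposition of X[M]
  (empty if X[M] is prime or degenerate, i.e. no decomposition step).\<close>
definition mod_part :: "('a \<times> 'a) set \<Rightarrow> 'a set \<Rightarrow> 'a set set" where
  "mod_part E M =
    (if is_prime E M \<or> is_degenerate E M then {}
     else if connected_on E M \<and> connected_on (co_edges E M) M then
       {S. is_module E M S \<and> S \<noteq> M \<and>
           (\<forall>S'. is_module E M S' \<and> S \<subseteq> S' \<and> S' \<noteq> M \<longrightarrow> S' = S)}
     else if \<not> connected_on E M then components E M
     else components (co_edges E M) M)"

text \<open>Vertex sets of the graphs on which the recursion is run.\<close>
inductive_set dec_nodes :: "'a set \<Rightarrow> ('a \<times> 'a) set \<Rightarrow> 'a set set"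
  for V :: "'a set" and E :: "('a \<times> 'a) set" where
  root: "V \<in> dec_nodes V E"
| sub: "M \<in> dec_nodes V E \<Longrightarrow> P \<in> mod_part E M \<Longrightarrow> P \<in> dec_nodes V E"

text \<open>Vertices of the modular tree: normal vertices Inl v (v \<in> V); for every part P
  of a decomposition step, the marker Inr (P, True) (the marker m_i in the quotient)
  and the marker Inr (P, False) (the marker m_i' attached to the root node of T_i).\<close>
type_synonym 'a tvert = "'a + ('a set \<times> bool)"

definition mt_verts :: "'a set \<Rightarrow> ('a \<times> 'a) set \<Rightarrow> 'a tvert set" where
  "mt_verts V E = Inl ` V \<union> {Inr (P, b) | P b. P \<in> dec_nodes V E \<and> P \<noteq> V}"

text \<open>Vertices of the root node of the modular tree of X[M].\<close>
definition node_verts :: "('a \<times> 'a) set \<Rightarrow> 'a set \<Rightarrow> 'a tvert set" where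
  "node_verts E M =
    (if mod_part E M = {} then Inl ` M else (\<lambda>P. Inr (P, True)) ` mod_part E M)"

text \<open>Edges of the root node of the modular tree of X[M] (X[M] itself or the quotient).\<close>
definition node_edges :: "('a \<times> 'a) set \<Rightarrow> 'a set \<Rightarrow> ('a tvert \<times> 'a tvert) set" where
  "node_edges E M =
    (if mod_part E M = {} then {(Inl x, Inl y) | x y. x \<in> M \<and> y \<in> M \<and> (x, y) \<in> E}
     else {(Inr (P, True), Inr (Q, True)) | P Q. P \<in> mod_part E M \<and> Q \<in> mod_part E M
             \<and> P \<noteq> Q \<and> (\<forall>x\<in>P. \<forall>y\<in>Q. (x, y) \<in> E)})"

definition mt_normal_edges :: "'a set \<Rightarrow> ('a \<times> 'a) set \<Rightarrow> ('a tvert \<times> 'a tvert) set" where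
  "mt_normal_edges V E =
    (\<Union>M\<in>dec_nodes V E. node_edges E M \<union>
       (if M = V then {} else
          {(Inr (M, False), u) | u. u \<in> node_verts E M} \<union>
          {(u, Inr (M, False)) | u. u \<in> node_verts E M}))"

text \<open>Tree edges, oriented from m_i to m_i'.\<close>
definition mt_tree_edges :: "'a set \<Rightarrow> ('a \<times> 'a) set \<Rightarrow> ('a tvert \<times> 'a tvert) set" where
  "mt_tree_edges V E = {(Inr (P, True), Inr (P, False)) | P. P \<in> dec_nodes V E \<and> P \<noteq> V}"

definition Aut_graph :: "'a set \<Rightarrow> ('a \<times> 'a) set \<Rightarrow> ('a \<Rightarrow> 'a) monoid" where
  "Aut_graph V E = \<lparr> carrier = {f. bij_betw f V V \<and> (\<forall>x. x \<notin> V \<longrightarrow> f x = x) \<and>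
        (\<forall>x\<in>V. \<forall>y\<in>V. (x, y) \<in> E \<longleftrightarrow> (f x, f y) \<in> E)},
     mult = (\<lambda>f g. f \<circ> g), one = id \<rparr>"

definition Aut_mtree :: "'a set \<Rightarrow> ('a \<times> 'a) set \<Rightarrow> ('a tvert \<Rightarrow> 'a tvert) monoid" where
  "Aut_mtree V E = \<lparr> carrier = {f. bij_betw f (mt_verts V E) (mt_verts V E) \<and>
        (\<forall>x. x \<notin> mt_verts V E \<longrightarrow> f x = x) \<and>
        (\<forall>u\<in>mt_verts V E. isl (f u) \<longleftrightarrow> isl u) \<and>
        (\<forall>u\<in>mt_verts V E. \<forall>w\<in>mt_verts V E.
            ((u, w) \<in> mt_normal_edges V E \<longleftrightarrow> (f u, f w) \<in> mt_normal_edges V E) \<and>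
            ((u, w) \<in> mt_tree_edges V E \<longleftrightarrow> (f u, f w) \<in> mt_tree_edges V E))},
     mult = (\<lambda>f g. f \<circ> g), one = id \<rparr>"

end

theory Submission
  imports Defs
begin



lemma rtrancl_map_inj1:
  assumes "inj g" and "(x, y) \<in> (map_prod g g ` R)\<^sup>*"
  shows "\<forall>a. x = g a \<longrightarrow> (\<exists>b. y = g b \<and> (a, b) \<in> R\<^sup>*)"
  using assms(2)
proof (induction rule: rtrancl_induct)
  case base
  then show ?case by auto
next
  case (step y z)
  show ?case
  proof (intro allI impI)
    fix a assume "x = g a"
    with step.IH obtain b where b: "y = g b" "(a, b) \<in> R\<^sup>*" by auto
    from step.hyps(2) obtain p q where "(p, q) \<in> R" "y = g p" "z = g q" by auto
    with b assms(1) have "p = b" by (auto dest: injD)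
    with b \<open>(p, q) \<in> R\<close> have "(a, q) \<in> R\<^sup>*" by (meson rtrancl.rtrancl_into_rtrancl)
    with \<open>z = g q\<close> show "\<exists>b. z = g b \<and> (a, b) \<in> R\<^sup>*" by blast
  qed
qed

lemma rtrancl_map_inj2:
  assumes "(a, b) \<in> R\<^sup>*"
  shows "(g a, g b) \<in> (map_prod g g ` R)\<^sup>*"
  using assms
proof (induction rule: rtrancl_induct)
  case base then show ?case by simp
next
  case (step y z)
  then have "(g y, g z) \<in> map_prod g g ` R" by force
  with step.IH show ?case by (meson rtrancl.rtrancl_into_rtrancl)
qed

lemma rtrancl_map_inj:
  assumes "inj g"
  shows "((g a, g b) \<in> (map_prod g g ` R)\<^sup>*) \<longleftrightarrow> ((a, b) \<in> R\<^sup>*)"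
  using rtrancl_map_inj1[OF assms] rtrancl_map_inj2[of a b R g] assms
  by (metis injD)

lemma bij_img_vimg: "bij g \<Longrightarrow> g ` (g -` T) = T"
  by (simp add: bij_is_surj surj_image_vimage_eq)

lemma bij_all_sets: "bij g \<Longrightarrow> (\<forall>T. P T) \<longleftrightarrow> (\<forall>S. P (g ` S))"
proof
  assume b: "bij g" and a: "\<forall>S. P (g ` S)"
  show "\<forall>T. P T"
  proof
    fix T
    from a have "P (g ` (g -` T))" by blast
    then show "P T" by (simp only: bij_img_vimg[OF b])
  qed
qed auto

lemma bij_set_image:
  assumes b: "bij g" and q: "\<And>S. Q' (g ` S) \<longleftrightarrow> Q S"
  shows "{T. Q' T} = (`) g ` {S. Q S}"
proof (rule Set.set_eqI, rule iffI)
  fix T assume "T \<in> {T. Q' T}"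
  then have "Q' (g ` (g -` T))" by (simp only: bij_img_vimg[OF b] mem_Collect_eq)
  then have "Q (g -` T)" using q by blast
  then show "T \<in> (`) g ` {S. Q S}" using bij_img_vimg[OF b, of T] by blast
next
  fix T assume "T \<in> (`) g ` {S. Q S}"
  then show "T \<in> {T. Q' T}" using q by auto
qed

context
  fixes g :: "'a \<Rightarrow> 'a" and E :: "('a \<times> 'a) set"
  assumes bg: "bij g"
begin

private lemma ig: "inj g" using bg bij_is_inj by blast

private abbreviation "Eg \<equiv> map_prod g g ` E"

private lemma memEg: "((g a, g b) \<in> Eg) \<longleftrightarrow> ((a, b) \<in> E)"
  using ig by (auto dest: injD)

lemma module_transp: "is_module Eg (g ` M) (g ` S) \<longleftrightarrow> is_module E M S"
  unfolding is_module_def using ig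
  by (auto simp: image_set_diff[OF ig, symmetric] memEg inj_image_subset_iff)

lemma prime_transp: "is_prime Eg (g ` M) \<longleftrightarrow> is_prime E M"
proof -
  have "is_prime Eg (g ` M) \<longleftrightarrow> (\<forall>S. is_module Eg (g ` M) (g ` S) \<longrightarrow> g ` S = g ` M \<or> card (g ` S) = 1)"
    unfolding is_prime_def by (rule bij_all_sets[OF bg])
  also have "\<dots> \<longleftrightarrow> is_prime E M"
  proof -
    have cs: "\<And>S. card (g ` S) = card S" by (rule card_image[OF inj_on_subset[OF ig subset_UNIV]])
    show ?thesis unfolding is_prime_def module_transp using ig
      by (simp add: inj_image_eq_iff cs)
  qed
  finally show ?thesis .
qed

lemma degenerate_transp: "is_degenerate Eg (g ` M) \<longleftrightarrow> is_degenerate E M"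
  unfolding is_degenerate_def using ig by (auto simp: memEg inj_eq)

lemma co_edges_transp: "co_edges Eg (g ` M) = map_prod g g ` co_edges E M"
  unfolding co_edges_def using ig by (auto simp: memEg inj_eq)

lemma restr_transp: "map_prod g g ` (R \<inter> M \<times> M) = map_prod g g ` R \<inter> g ` M \<times> g ` M"
  using ig by (auto simp: inj_eq)

lemma components_transp: "components (map_prod g g ` R) (g ` M) = (`) g ` components R M"
proof -
  have "components (map_prod g g ` R) (g ` M) =
     {{y \<in> g ` M. (x, y) \<in> (map_prod g g ` (R \<inter> M \<times> M))\<^sup>*} | x. x \<in> g ` M}"
    unfolding components_def restr_transp ..
  also have "\<dots> = {g ` {y \<in> M. (x, y) \<in> (R \<inter> M \<times> M)\<^sup>*} | x. x \<in> M}"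
  proof -
    have "{y \<in> g ` M. (g x, y) \<in> (map_prod g g ` (R \<inter> M \<times> M))\<^sup>*} = g ` {y \<in> M. (x, y) \<in> (R \<inter> M \<times> M)\<^sup>*}" for x
      using rtrancl_map_inj[OF ig] by auto
    then show ?thesis by blast
  qed
  also have "\<dots> = (`) g ` components R M" unfolding components_def by blast
  finally show ?thesis .
qed

lemma connected_transp: "connected_on (map_prod g g ` R) (g ` M) \<longleftrightarrow> connected_on R M"
proof -
  have i: "inj ((`) g)" using ig by (metis inj_onI inj_image_eq_iff)
  have "{g ` M} = (`) g ` {M}" by simp
  then show ?thesis unfolding connected_on_def components_transp
    using inj_image_eq_iff[OF i] by metis
qed

lemma mod_part_transp: "mod_part Eg (g ` M) = (`) g ` mod_part E M"
proof -
  have mx: "{S. is_module Eg (g ` M) S \<and> S \<noteq> g ` M \<and>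
           (\<forall>S'. is_module Eg (g ` M) S' \<and> S \<subseteq> S' \<and> S' \<noteq> g ` M \<longrightarrow> S' = S)}
     = (`) g ` {S. is_module E M S \<and> S \<noteq> M \<and>
           (\<forall>S'. is_module E M S' \<and> S \<subseteq> S' \<and> S' \<noteq> M \<longrightarrow> S' = S)}"
  proof (rule bij_set_image[OF bg])
    fix S
    have a0: "(\<forall>S'. is_module Eg (g ` M) S' \<and> g ` S \<subseteq> S' \<and> S' \<noteq> g ` M \<longrightarrow> S' = g ` S) \<longleftrightarrow>
      (\<forall>S'. is_module Eg (g ` M) (g ` S') \<and> g ` S \<subseteq> g ` S' \<and> g ` S' \<noteq> g ` M \<longrightarrow> g ` S' = g ` S)"
      by (rule bij_all_sets[OF bg])
    then show "(is_module Eg (g ` M) (g ` S) \<and> g ` S \<noteq> g ` M \<and>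
           (\<forall>S'. is_module Eg (g ` M) S' \<and> g ` S \<subseteq> S' \<and> S' \<noteq> g ` M \<longrightarrow> S' = g ` S)) \<longleftrightarrow>
         (is_module E M S \<and> S \<noteq> M \<and>
           (\<forall>S'. is_module E M S' \<and> S \<subseteq> S' \<and> S' \<noteq> M \<longrightarrow> S' = S))"
    proof -
      have a3: "(\<forall>S'. is_module Eg (g ` M) (g ` S') \<and> g ` S \<subseteq> g ` S' \<and> g ` S' \<noteq> g ` M \<longrightarrow> g ` S' = g ` S)
        \<longleftrightarrow> (\<forall>S'. is_module E M S' \<and> S \<subseteq> S' \<and> S' \<noteq> M \<longrightarrow> S' = S)"
        by (simp only: module_transp inj_image_subset_iff[OF ig] inj_image_eq_iff[OF ig])
      have a2: "g ` S \<noteq> g ` M \<longleftrightarrow> S \<noteq> M" by (simp only: inj_image_eq_iff[OF ig])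
      show ?thesis using a0 a3 a2 module_transp[of M S] by (simp only:)
    qed
  qed
  have c1: "connected_on Eg (g ` M) \<longleftrightarrow> connected_on E M" by (rule connected_transp)
  have c2: "connected_on (co_edges Eg (g ` M)) (g ` M) \<longleftrightarrow> connected_on (co_edges E M) M"
    unfolding co_edges_transp by (rule connected_transp)
  have p: "(is_prime Eg (g ` M) \<or> is_degenerate Eg (g ` M)) \<longleftrightarrow> (is_prime E M \<or> is_degenerate E M)"
    using prime_transp degenerate_transp by blast
  show ?thesis
  proof (cases "is_prime E M \<or> is_degenerate E M")
    case True then show ?thesis using p unfolding mod_part_def by simp
  next
    case f1: False
    show ?thesis
    proof (cases "connected_on E M \<and> connected_on (co_edges E M) M")
      case True then show ?thesis using p f1 c1 c2 mx unfolding mod_part_def by simp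
    next
      case f2: False
      show ?thesis
      proof (cases "connected_on E M")
        case True then show ?thesis using p f1 f2 c1 c2 unfolding mod_part_def
          by (simp add: co_edges_transp components_transp)
      next
        case False then show ?thesis using p f1 f2 c1 c2 unfolding mod_part_def
          by (simp add: components_transp)
      qed
    qed
  qed
qed

end

definition hmap :: "('a \<Rightarrow> 'a) \<Rightarrow> 'a tvert \<Rightarrow> 'a tvert" where
  "hmap g = map_sum g (\<lambda>(P, b). (g ` P, b))"

lemma hmap_Inl[simp]: "hmap g (Inl v) = Inl (g v)" by (simp add: hmap_def)
lemma hmap_Inr[simp]: "hmap g (Inr (P, b)) = Inr (g ` P, b)" by (simp add: hmap_def)

lemma hmap_inj: assumes "inj g" shows "inj (hmap g)"
proof (rule injI)
  fix u w assume "hmap g u = hmap g w"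
  then show "u = w" using assms
    by (cases u; cases w) (auto simp: inj_eq inj_image_eq_iff)
qed

context
  fixes g :: "'a \<Rightarrow> 'a" and E :: "('a \<times> 'a) set" and V :: "'a set"
  assumes bg: "bij g"
begin

private lemma ig2: "inj g" using bg bij_is_inj by blast
private abbreviation "Eg2 \<equiv> map_prod g g ` E"
private abbreviation "hh \<equiv> hmap g"

private lemma memEg2: "((g a, g b) \<in> Eg2) \<longleftrightarrow> ((a, b) \<in> E)"
  using ig2 by (auto dest: injD)

lemma dec_transp: "dec_nodes (g ` V) Eg2 = (`) g ` dec_nodes V E"
proof (rule Set.set_eqI, rule iffI)
  fix M assume "M \<in> dec_nodes (g ` V) Eg2"
  then show "M \<in> (`) g ` dec_nodes V E"
  proof (induction rule: dec_nodes.induct)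
    case root then show ?case by (blast intro: dec_nodes.root)
  next
    case (sub M P)
    then obtain M0 where M0: "M = g ` M0" "M0 \<in> dec_nodes V E" by blast
    with sub.hyps(2) have "P \<in> (`) g ` mod_part E M0" using mod_part_transp[OF bg] by simp
    with M0 show ?case by (blast intro: dec_nodes.sub)
  qed
next
  fix M assume "M \<in> (`) g ` dec_nodes V E"
  then obtain M0 where M0: "M = g ` M0" "M0 \<in> dec_nodes V E" by blast
  from M0(2) have "g ` M0 \<in> dec_nodes (g ` V) Eg2"
  proof (induction rule: dec_nodes.induct)
    case root then show ?case by (rule dec_nodes.root)
  next
    case (sub M P)
    have "g ` P \<in> mod_part Eg2 (g ` M)" using mod_part_transp[OF bg] sub.hyps(2) by simp
    with sub.IH show ?case by (rule dec_nodes.sub)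
  qed
  with M0 show "M \<in> dec_nodes (g ` V) Eg2" by simp
qed

lemma mp_empty_transp: "mod_part Eg2 (g ` M) = {} \<longleftrightarrow> mod_part E M = {}"
  using mod_part_transp[OF bg] by simp

lemma node_verts_transp: "node_verts Eg2 (g ` M) = hh ` node_verts E M"
  unfolding node_verts_def mp_empty_transp mod_part_transp[OF bg]
  by (auto simp: image_image)

lemma node_edges_transp: "node_edges Eg2 (g ` M) = map_prod hh hh ` node_edges E M"
proof (cases "mod_part E M = {}")
  case True
  then show ?thesis unfolding node_edges_def mp_empty_transp
    using ig2 apply (auto simp: inj_eq image_iff)
    apply (metis hmap_Inl)
    by force
next
  case False
  have e1: "node_edges Eg2 (g ` M) = {(Inr (P, True), Inr (Q, True)) |P Q. P \<in> (`) g ` mod_part E M \<and> Q \<in> (`) g ` mod_part E M \<and>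
        P \<noteq> Q \<and> (\<forall>x\<in>P. \<forall>y\<in>Q. (x, y) \<in> Eg2)}" using False unfolding node_edges_def mod_part_transp[OF bg] by simp
  have e2: "node_edges E M = {(Inr (P, True), Inr (Q, True)) |P Q. P \<in> mod_part E M \<and> Q \<in> mod_part E M \<and>
        P \<noteq> Q \<and> (\<forall>x\<in>P. \<forall>y\<in>Q. (x, y) \<in> E)}" using False unfolding node_edges_def by simp
  show ?thesis unfolding e1 e2
  proof (rule Set.set_eqI, rule iffI)
    fix z :: "'a tvert \<times> 'a tvert" assume "z \<in> {(Inr (P, True), Inr (Q, True)) |P Q. P \<in> (`) g ` mod_part E M \<and> Q \<in> (`) g ` mod_part E M \<and>
        P \<noteq> Q \<and> (\<forall>x\<in>P. \<forall>y\<in>Q. (x, y) \<in> Eg2)}"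
    then obtain P0 Q0 where z: "z = (Inr (g ` P0, True), Inr (g ` Q0, True))" "P0 \<in> mod_part E M"
      "Q0 \<in> mod_part E M" "g ` P0 \<noteq> g ` Q0" "\<forall>x\<in>g ` P0. \<forall>y\<in>g ` Q0. (x, y) \<in> Eg2" by blast
    then have "P0 \<noteq> Q0" "\<forall>x\<in>P0. \<forall>y\<in>Q0. (x, y) \<in> E" using memEg2 by auto
    with z show "z \<in> map_prod hh hh ` {(Inr (P, True), Inr (Q, True)) |P Q. P \<in> mod_part E M \<and> Q \<in> mod_part E M \<and>
        P \<noteq> Q \<and> (\<forall>x\<in>P. \<forall>y\<in>Q. (x, y) \<in> E)}"
      by (intro image_eqI[where x="(Inr (P0, True), Inr (Q0, True))"]) auto
  next
    fix z :: "'a tvert \<times> 'a tvert" assume "z \<in> map_prod hh hh ` {(Inr (P, True), Inr (Q, True)) |P Q. P \<in> mod_part E M \<and> Q \<in> mod_part E M \<and>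
        P \<noteq> Q \<and> (\<forall>x\<in>P. \<forall>y\<in>Q. (x, y) \<in> E)}"
    then obtain w where w: "z = map_prod hh hh w" "w \<in> {(Inr (P, True), Inr (Q, True)) |P Q. P \<in> mod_part E M \<and> Q \<in> mod_part E M \<and>
        P \<noteq> Q \<and> (\<forall>x\<in>P. \<forall>y\<in>Q. (x, y) \<in> E)}" by (erule imageE)
    then obtain P0 Q0 where z0: "w = (Inr (P0, True), Inr (Q0, True))" "P0 \<in> mod_part E M"
      "Q0 \<in> mod_part E M" "P0 \<noteq> Q0" "\<forall>x\<in>P0. \<forall>y\<in>Q0. (x, y) \<in> E" by blast
    then have z: "z = (Inr (g ` P0, True), Inr (g ` Q0, True))" "P0 \<in> mod_part E M"
      "Q0 \<in> mod_part E M" "P0 \<noteq> Q0" "\<forall>x\<in>P0. \<forall>y\<in>Q0. (x, y) \<in> E" using w by auto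
    then have "g ` P0 \<noteq> g ` Q0" "\<forall>x\<in>g ` P0. \<forall>y\<in>g ` Q0. (x, y) \<in> Eg2"
      using memEg2 ig2 by (auto simp: inj_image_eq_iff)
    with z show "z \<in> {(Inr (P, True), Inr (Q, True)) |P Q. P \<in> (`) g ` mod_part E M \<and> Q \<in> (`) g ` mod_part E M \<and>
        P \<noteq> Q \<and> (\<forall>x\<in>P. \<forall>y\<in>Q. (x, y) \<in> Eg2)}" by blast
  qed
qed

lemma gV_eq: "g ` P = g ` V \<longleftrightarrow> P = V" using ig2 by (simp add: inj_image_eq_iff)

lemma verts_transp: "mt_verts (g ` V) Eg2 = hh ` mt_verts V E"
proof (rule Set.set_eqI, rule iffI)
  fix u :: "'a tvert" assume "u \<in> mt_verts (g ` V) Eg2"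
  then consider (a) v where "v \<in> V" "u = Inl (g v)"
    | (b) P b where "P \<in> dec_nodes V E" "P \<noteq> V" "u = Inr (g ` P, b)"
    unfolding mt_verts_def dec_transp using gV_eq by blast
  then show "u \<in> hh ` mt_verts V E"
  proof cases
    case a then show ?thesis unfolding mt_verts_def by (intro image_eqI[where x="Inl v"]) auto
  next
    case b then show ?thesis unfolding mt_verts_def by (intro image_eqI[where x="Inr (P, b)"]) auto
  qed
next
  fix u :: "'a tvert" assume "u \<in> hh ` mt_verts V E"
  then obtain w where w: "u = hh w" "w \<in> mt_verts V E" by (erule imageE)
  then show "u \<in> mt_verts (g ` V) Eg2"
    unfolding mt_verts_def dec_transp using gV_eq by auto
qed

lemma tree_transp: "mt_tree_edges (g ` V) Eg2 = map_prod hh hh ` mt_tree_edges V E"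
proof (rule Set.set_eqI, rule iffI)
  fix u :: "'a tvert \<times> 'a tvert" assume "u \<in> mt_tree_edges (g ` V) Eg2"
  then obtain P where P: "P \<in> dec_nodes V E" "P \<noteq> V" "u = (Inr (g ` P, True), Inr (g ` P, False))"
    unfolding mt_tree_edges_def dec_transp using gV_eq by blast
  then show "u \<in> map_prod hh hh ` mt_tree_edges V E"
    unfolding mt_tree_edges_def by (intro image_eqI[where x="(Inr (P, True), Inr (P, False))"]) auto
next
  fix u :: "'a tvert \<times> 'a tvert" assume "u \<in> map_prod hh hh ` mt_tree_edges V E"
  then obtain w where w: "u = map_prod hh hh w" "w \<in> mt_tree_edges V E" by (erule imageE)
  then show "u \<in> mt_tree_edges (g ` V) Eg2"
    unfolding mt_tree_edges_def dec_transp using gV_eq by auto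
qed

lemma extra_transp:
  "{(Inr (g ` M, False), u) | u. u \<in> hh ` A} \<union> {(u, Inr (g ` M, False)) | u. u \<in> hh ` A}
   = map_prod hh hh ` ({(Inr (M, False), u) | u. u \<in> A} \<union> {(u, Inr (M, False)) | u. u \<in> A})"
proof -
  have 1: "{(Inr (M', False), u) | u. u \<in> B} = (\<lambda>u. (Inr (M', False), u)) ` B" for M' :: "'a set" and B :: "'a tvert set" by auto
  have 2: "{(u, Inr (M', False)) | u. u \<in> B} = (\<lambda>u. (u, Inr (M', False))) ` B" for M' :: "'a set" and B :: "'a tvert set" by auto
  show ?thesis unfolding 1 2 image_Un image_image by simp
qed

lemma normal_transp: "mt_normal_edges (g ` V) Eg2 = map_prod hh hh ` mt_normal_edges V E"
proof -
  have "mt_normal_edges (g ` V) Eg2 = (\<Union>M\<in>dec_nodes V E. node_edges Eg2 (g ` M) \<union>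
       (if g ` M = g ` V then {} else
          {(Inr (g ` M, False), u) | u. u \<in> node_verts Eg2 (g ` M)} \<union>
          {(u, Inr (g ` M, False)) | u. u \<in> node_verts Eg2 (g ` M)}))"
    unfolding mt_normal_edges_def dec_transp by (simp add: image_image)
  also have "\<dots> = (\<Union>M\<in>dec_nodes V E. map_prod hh hh ` (node_edges E M \<union>
       (if M = V then {} else
          {(Inr (M, False), u) | u. u \<in> node_verts E M} \<union>
          {(u, Inr (M, False)) | u. u \<in> node_verts E M})))"
    unfolding node_edges_transp node_verts_transp gV_eq extra_transp image_Un
    by (rule SUP_cong[OF refl]) (simp add: image_Un split: if_split)
  also have "\<dots> = map_prod hh hh ` mt_normal_edges V E"
    unfolding mt_normal_edges_def image_UN ..
  finally show ?thesis .
qed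

end

definition comp_of :: "('a \<times> 'a) set \<Rightarrow> 'a set \<Rightarrow> 'a \<Rightarrow> 'a set" where
  "comp_of R M x = {y \<in> M. (x, y) \<in> (R \<inter> M \<times> M)\<^sup>*}"

lemma components_eq: "components R M = comp_of R M ` M"
  unfolding components_def comp_of_def by blast

lemma rtr_restr_in: "(x, y) \<in> (R \<inter> M \<times> M)\<^sup>* \<Longrightarrow> x \<in> M \<Longrightarrow> y \<in> M"
  by (induction rule: rtrancl_induct) auto

lemma comp_self: "x \<in> M \<Longrightarrow> x \<in> comp_of R M x"
  unfolding comp_of_def by auto

lemma comp_sub: "comp_of R M x \<subseteq> M"
  unfolding comp_of_def by auto

lemma sym_restr: "sym R \<Longrightarrow> sym (R \<inter> M \<times> M)"
  unfolding sym_def by auto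

lemma comp_same:
  assumes "sym R" "z \<in> comp_of R M x"
  shows "comp_of R M z = comp_of R M x"
proof -
  have s: "sym ((R \<inter> M \<times> M)\<^sup>*)" using sym_rtrancl sym_restr assms(1) by blast
  have xz: "(x, z) \<in> (R \<inter> M \<times> M)\<^sup>*" using assms(2) unfolding comp_of_def by auto
  then have zx: "(z, x) \<in> (R \<inter> M \<times> M)\<^sup>*" using s unfolding sym_def by blast
  show ?thesis
  proof (rule Set.set_eqI)
    fix y show "y \<in> comp_of R M z \<longleftrightarrow> y \<in> comp_of R M x"
      unfolding comp_of_def using xz zx rtrancl_trans[of x z] rtrancl_trans[of z x] by blast
  qed
qed

lemma comp_disj:
  assumes "sym R" "z \<in> comp_of R M x" "z \<in> comp_of R M x'"
  shows "comp_of R M x = comp_of R M x'"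
  using comp_same[OF assms(1,2)] comp_same[OF assms(1,3)] by simp

lemma comp_closed:
  assumes "sym R" "c \<in> comp_of R M x" "z \<in> M" "(z, c) \<in> R"
  shows "z \<in> comp_of R M x"
proof -
  have c: "c \<in> M" "(x, c) \<in> (R \<inter> M \<times> M)\<^sup>*" using assms(2) unfolding comp_of_def by auto
  have "(c, z) \<in> R" using assms(1,4) unfolding sym_def by blast
  then have "(c, z) \<in> R \<inter> M \<times> M" using c assms(3) by blast
  with c(2) have "(x, z) \<in> (R \<inter> M \<times> M)\<^sup>*" by (rule rtrancl_into_rtrancl)
  then show ?thesis using assms(3) unfolding comp_of_def by blast
qed

lemma not_conn_comp_proper:
  assumes "sym R" "\<not> connected_on R M" "C \<in> components R M"
  shows "C \<noteq> M"
proof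
  assume CM: "C = M"
  from assms(3) obtain x where x: "x \<in> M" "C = comp_of R M x" unfolding components_eq by blast
  have "comp_of R M y = M" if "y \<in> M" for y
    using comp_same[OF assms(1), of y M x] that x CM by simp
  then have "components R M = {M}" unfolding components_eq using x by auto
  with assms(2) show False unfolding connected_on_def by simp
qed

lemma separation:
  assumes "A \<subseteq> M" "A \<noteq> {}" "A \<noteq> M" "\<forall>a\<in>A. \<forall>b\<in>M - A. (a, b) \<notin> R"
  shows "\<not> connected_on R M"
proof
  assume "connected_on R M"
  then have c: "components R M = {M}" unfolding connected_on_def .
  obtain a where a: "a \<in> A" using assms(2) by blast
  obtain b where b: "b \<in> M" "b \<notin> A" using assms(1,3) by blast
  have "comp_of R M a \<in> components R M" unfolding components_eq using a assms(1) by blast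
  with c have "comp_of R M a = M" by simp
  with b have ab: "(a, b) \<in> (R \<inter> M \<times> M)\<^sup>*" unfolding comp_of_def by blast
  have "y \<in> A" if "(a, y) \<in> (R \<inter> M \<times> M)\<^sup>*" for y
    using that
  proof (induction rule: rtrancl_induct)
    case base then show ?case using a .
  next
    case (step y z) then show ?case using assms(4) by blast
  qed
  with ab b show False by blast
qed

lemma co_sym: "sym E \<Longrightarrow> sym (co_edges E M)"
  unfolding sym_def co_edges_def by auto

lemma comp_module_E:
  assumes "sym E" "C \<in> components E M"
  shows "is_module E M C"
proof -
  from assms(2) obtain x where x: "x \<in> M" "C = comp_of E M x" unfolding components_eq by blast
  have "(z, c) \<notin> E" if "z \<in> M - C" "c \<in> C" for z c
    using comp_closed[OF assms(1), of c M x z] that x by blast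
  moreover have "C \<subseteq> M" "C \<noteq> {}" using x comp_sub[of E M x] comp_self[of x M E] by auto
  ultimately show ?thesis unfolding is_module_def by blast
qed

lemma comp_module_co:
  assumes "sym E" "C \<in> components (co_edges E M) M"
  shows "is_module E M C"
proof -
  from assms(2) obtain x where x: "x \<in> M" "C = comp_of (co_edges E M) M x" unfolding components_eq by blast
  have "(z, c) \<in> E" if "z \<in> M - C" "c \<in> C" for z c
  proof (rule ccontr)
    assume "(z, c) \<notin> E"
    moreover have "c \<in> M" "z \<noteq> c" using that x comp_sub[of "co_edges E M" M x] by auto
    ultimately have "(z, c) \<in> co_edges E M" using that unfolding co_edges_def by auto
    then have "z \<in> C" using comp_closed[OF co_sym[OF assms(1)]] that x by blast
    with that show False by blast
  qed
  moreover have "C \<subseteq> M" "C \<noteq> {}" using x comp_sub[of "co_edges E M" M x] comp_self[of x M "co_edges E M"] by auto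
  ultimately show ?thesis unfolding is_module_def by blast
qed


definition maxmods :: "('a \<times> 'a) set \<Rightarrow> 'a set \<Rightarrow> 'a set set" where
  "maxmods E M = {S. is_module E M S \<and> S \<noteq> M \<and>
           (\<forall>S'. is_module E M S' \<and> S \<subseteq> S' \<and> S' \<noteq> M \<longrightarrow> S' = S)}"

lemma mp_cases:
  assumes "mod_part E M \<noteq> {}"
  obtains (mx) "\<not> is_prime E M" "connected_on E M" "connected_on (co_edges E M) M" "mod_part E M = maxmods E M"
   | (c1) "\<not> is_prime E M" "\<not> connected_on E M" "mod_part E M = components E M"
   | (c2) "\<not> is_prime E M" "connected_on E M" "\<not> connected_on (co_edges E M) M"
          "mod_part E M = components (co_edges E M) M"
proof -
  have np: "\<not> (is_prime E M \<or> is_degenerate E M)"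
    using assms unfolding mod_part_def by (auto split: if_splits)
  show ?thesis
  proof (cases "connected_on E M \<and> connected_on (co_edges E M) M")
    case True
    then show ?thesis using np mx unfolding mod_part_def maxmods_def by auto
  next
    case f: False
    show ?thesis
    proof (cases "connected_on E M")
      case True
      then show ?thesis using np f c2 unfolding mod_part_def by auto
    next
      case False
      then show ?thesis using np f c1 unfolding mod_part_def by auto
    qed
  qed
qed

lemma not_prime_single: "\<not> is_prime E M \<Longrightarrow> x \<in> M \<Longrightarrow> M \<noteq> {x}"
  unfolding is_prime_def is_module_def by auto

lemma single_module: "x \<in> M \<Longrightarrow> is_module E M {x}"
  unfolding is_module_def by auto

context
  fixes E :: "('a \<times> 'a) set"
  assumes symE: "sym E"
begin

lemma part_props:
  assumes "P \<in> mod_part E M"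
  shows "is_module E M P" "P \<subseteq> M" "P \<noteq> {}" "P \<noteq> M"
proof -
  have ne: "mod_part E M \<noteq> {}" using assms by blast
  have "is_module E M P \<and> P \<noteq> M"
    using ne
  proof (cases rule: mp_cases)
    case mx then show ?thesis using assms unfolding maxmods_def by blast
  next
    case c1 then show ?thesis using assms comp_module_E[OF symE] not_conn_comp_proper[OF symE] by auto
  next
    case c2 then show ?thesis using assms comp_module_co[OF symE] not_conn_comp_proper[OF co_sym[OF symE]] by auto
  qed
  then show "is_module E M P" "P \<subseteq> M" "P \<noteq> {}" "P \<noteq> M" unfolding is_module_def by auto
qed

lemma part_cover:
  assumes "finite M" "mod_part E M \<noteq> {}" "x \<in> M"
  shows "\<exists>P\<in>mod_part E M. x \<in> P"
  using assms(2)
proof (cases rule: mp_cases)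
  case mx
  let ?Q = "\<lambda>S. is_module E M S \<and> S \<noteq> M \<and> x \<in> S"
  have q1: "?Q {x}" using single_module[OF assms(3)] not_prime_single[OF mx(1) assms(3)] by auto
  have q2: "\<forall>S. ?Q S \<longrightarrow> card S < Suc (card M)"
    using assms(1) unfolding is_module_def by (simp add: card_mono le_imp_less_Suc)
  obtain S where S: "?Q S" "\<forall>S'. ?Q S' \<longrightarrow> card S' \<le> card S"
    using Lattices_Big.ex_has_greatest_nat[of ?Q "{x}" card "Suc (card M)"] q1 q2 by blast
  have "S \<in> maxmods E M"
    unfolding maxmods_def
  proof (intro CollectI conjI allI impI)
    show "is_module E M S" "S \<noteq> M" using S by auto
    fix S' assume a: "is_module E M S' \<and> S \<subseteq> S' \<and> S' \<noteq> M"
    then have "?Q S'" using S by auto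
    then have "card S' \<le> card S" using S by auto
    moreover have "finite S'" using a assms(1) unfolding is_module_def by (meson finite_subset)
    ultimately show "S' = S" using a card_subset_eq by (metis antisym card_mono)
  qed
  then show ?thesis using mx S by auto
next
  case c1
  then show ?thesis using assms(3) comp_self[of x M E] unfolding components_eq by auto
next
  case c2
  then show ?thesis using assms(3) comp_self[of x M "co_edges E M"] unfolding components_eq by auto
qed

lemma union_module:
  assumes "is_module E M S1" "is_module E M S2" "z \<in> S1" "z \<in> S2"
  shows "is_module E M (S1 \<union> S2)"
  unfolding is_module_def
proof (intro conjI ballI)
  show "S1 \<union> S2 \<subseteq> M" "S1 \<union> S2 \<noteq> {}" using assms unfolding is_module_def by auto
  fix w assume w: "w \<in> M - (S1 \<union> S2)"
  then have w1: "(\<forall>y\<in>S1. (w, y) \<in> E) \<or> (\<forall>y\<in>S1. (w, y) \<notin> E)"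
    and w2: "(\<forall>y\<in>S2. (w, y) \<in> E) \<or> (\<forall>y\<in>S2. (w, y) \<notin> E)"
    using assms(1,2) unfolding is_module_def by auto
  show "(\<forall>y\<in>S1 \<union> S2. (w, y) \<in> E) \<or> (\<forall>y\<in>S1 \<union> S2. (w, y) \<notin> E)"
    using w1 w2 assms(3,4) by blast
qed

lemma maxmods_disj:
  assumes conn: "connected_on E M" and coconn: "connected_on (co_edges E M) M"
    and S1: "S1 \<in> maxmods E M" and S2: "S2 \<in> maxmods E M" and ne: "S1 \<noteq> S2"
  shows "S1 \<inter> S2 = {}"
proof (rule ccontr)
  assume "S1 \<inter> S2 \<noteq> {}"
  then obtain z where z: "z \<in> S1" "z \<in> S2" by blast
  have m1: "is_module E M S1" and m2: "is_module E M S2"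
    and mx1: "\<And>S'. is_module E M S' \<Longrightarrow> S1 \<subseteq> S' \<Longrightarrow> S' \<noteq> M \<Longrightarrow> S' = S1"
    and mx2: "\<And>S'. is_module E M S' \<Longrightarrow> S2 \<subseteq> S' \<Longrightarrow> S' \<noteq> M \<Longrightarrow> S' = S2"
    using S1 S2 unfolding maxmods_def by auto
  have sub1: "S1 \<subseteq> M" and sub2: "S2 \<subseteq> M" using m1 m2 unfolding is_module_def by auto
  have um: "is_module E M (S1 \<union> S2)" using union_module[OF m1 m2 z] .
  have U: "S1 \<union> S2 = M"
  proof (rule ccontr)
    assume "S1 \<union> S2 \<noteq> M"
    then have "S1 \<union> S2 = S1" "S1 \<union> S2 = S2" using mx1[OF um] mx2[OF um] by auto
    with ne show False by blast
  qed
  obtain x where x: "x \<in> S1" "x \<notin> S2"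
  proof -
    have "\<not> S1 \<subseteq> S2"
    proof
      assume "S1 \<subseteq> S2"
      then have "S2 = S1" using mx1[OF m2] S2 unfolding maxmods_def by blast
      with ne show False by simp
    qed
    then show ?thesis using that by blast
  qed
  obtain y where y: "y \<in> S2" "y \<notin> S1"
  proof -
    have "\<not> S2 \<subseteq> S1"
    proof
      assume "S2 \<subseteq> S1"
      then have "S1 = S2" using mx2[OF m1] S1 unfolding maxmods_def by blast
      with ne show False by simp
    qed
    then show ?thesis using that by blast
  qed
  have yM: "y \<in> M - S1" using y sub2 by blast
  have Yu: "(\<forall>s\<in>S1. (y, s) \<in> E) \<or> (\<forall>s\<in>S1. (y, s) \<notin> E)" using m1 yM unfolding is_module_def by blast
  have Au: "(\<forall>b\<in>S2. (a, b) \<in> E) \<or> (\<forall>b\<in>S2. (a, b) \<notin> E)" if "a \<in> S1 - S2" for a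
    using m2 that sub1 unfolding is_module_def by blast
  have A: "S1 - S2 \<subseteq> M" "S1 - S2 \<noteq> {}" "S1 - S2 \<noteq> M" using x y sub1 sub2 by auto
  have MA: "M - (S1 - S2) = S2" using U by blast
  show False
  proof (cases "(x, y) \<in> E")
    case True
    then have "(y, x) \<in> E" using symE unfolding sym_def by blast
    then have ys: "\<forall>s\<in>S1. (y, s) \<in> E" using Yu x by blast
    have "(a, b) \<in> E" if "a \<in> S1 - S2" "b \<in> S2" for a b
    proof -
      have "(y, a) \<in> E" using ys that by blast
      then have "(a, y) \<in> E" using symE unfolding sym_def by blast
      then show ?thesis using Au[OF that(1)] y that(2) by blast
    qed
    then have "\<forall>a\<in>S1 - S2. \<forall>b\<in>M - (S1 - S2). (a, b) \<notin> co_edges E M"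
      unfolding MA co_edges_def by blast
    then have "\<not> connected_on (co_edges E M) M" using separation[OF A] by blast
    with coconn show False by blast
  next
    case False
    then have "(y, x) \<notin> E" using symE unfolding sym_def by blast
    then have ys: "\<forall>s\<in>S1. (y, s) \<notin> E" using Yu x by blast
    have "(a, b) \<notin> E" if "a \<in> S1 - S2" "b \<in> S2" for a b
    proof -
      have "(y, a) \<notin> E" using ys that by blast
      then have "(a, y) \<notin> E" using symE unfolding sym_def by blast
      then show ?thesis using Au[OF that(1)] y that(2) by blast
    qed
    then have "\<forall>a\<in>S1 - S2. \<forall>b\<in>M - (S1 - S2). (a, b) \<notin> E"
      unfolding MA by blast
    then have "\<not> connected_on E M" using separation[OF A] by blast
    with conn show False by blast
  qed
qed

lemma part_disj:
  assumes "P \<in> mod_part E M" "Q \<in> mod_part E M" "P \<noteq> Q"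
  shows "P \<inter> Q = {}"
proof -
  have ne: "mod_part E M \<noteq> {}" using assms by blast
  then show ?thesis
  proof (cases rule: mp_cases)
    case mx then show ?thesis using maxmods_disj assms by auto
  next
    case c1
    then obtain x x' where "P = comp_of (E) M x" "Q = comp_of (E) M x'"
      using assms(1,2) unfolding components_eq by auto
    then show ?thesis using assms(3) comp_disj[OF symE, of _ M x x'] by blast
  next
    case c2
    then obtain x x' where "P = comp_of (co_edges E M) M x" "Q = comp_of (co_edges E M) M x'"
      using assms(1,2) unfolding components_eq by auto
    then show ?thesis using assms(3) comp_disj[OF co_sym[OF symE, of M], of _ M x x'] by blast
  qed
qed

end

definition Sst :: "'a set \<Rightarrow> ('a \<times> 'a) set \<Rightarrow> ('a tvert \<times> 'a tvert) set" where
  "Sst V E = mt_tree_edges V E \<union> {(a, b) \<in> mt_normal_edges V E. \<exists>u. (u, a) \<in> mt_tree_edges V E}"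

definition reps :: "'a set \<Rightarrow> ('a \<times> 'a) set \<Rightarrow> 'a \<Rightarrow> 'a tvert set" where
  "reps V E x = {Inl x} \<union> {Inr (Q, True) | Q. Q \<in> dec_nodes V E \<and> Q \<noteq> V \<and> x \<in> Q}"

lemma nv_shape:
  "u \<in> node_verts E M \<Longrightarrow> (\<exists>x\<in>M. u = Inl x \<and> mod_part E M = {}) \<or> (\<exists>Q\<in>mod_part E M. u = Inr (Q, True))"
  unfolding node_verts_def by (auto split: if_splits)

lemma ne_shape:
  "(a, b) \<in> node_edges E M \<Longrightarrow>
    (\<exists>x y. a = Inl x \<and> b = Inl y \<and> x \<in> M \<and> y \<in> M \<and> (x, y) \<in> E \<and> mod_part E M = {}) \<or>
    (\<exists>P Q. a = Inr (P, True) \<and> b = Inr (Q, True) \<and> P \<in> mod_part E M \<and> Q \<in> mod_part E M \<and> P \<noteq> Q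
       \<and> (\<forall>x\<in>P. \<forall>y\<in>Q. (x, y) \<in> E))"
  unfolding node_edges_def by (auto split: if_splits)

lemma ne_in_nv: "(a, b) \<in> node_edges E M \<Longrightarrow> a \<in> node_verts E M \<and> b \<in> node_verts E M"
  unfolding node_edges_def node_verts_def by (auto split: if_splits)

lemma te_iff: "(a, b) \<in> mt_tree_edges V E \<longleftrightarrow>
   (\<exists>P. P \<in> dec_nodes V E \<and> P \<noteq> V \<and> a = Inr (P, True) \<and> b = Inr (P, False))"
  unfolding mt_tree_edges_def by blast

lemma NE_iff: "(a, b) \<in> mt_normal_edges V E \<longleftrightarrow>
   (\<exists>M\<in>dec_nodes V E. (a, b) \<in> node_edges E M \<or>
      (M \<noteq> V \<and> ((a = Inr (M, False) \<and> b \<in> node_verts E M) \<or> (b = Inr (M, False) \<and> a \<in> node_verts E M))))"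
  unfolding mt_normal_edges_def by (auto split: if_splits)

lemma nv_not_False: "u \<in> node_verts E M \<Longrightarrow> u \<noteq> Inr (Q, False)"
  using nv_shape by fastforce

context
  fixes V :: "'a set" and E :: "('a \<times> 'a) set"
  assumes fin: "finite V" and sg: "simple_graph V E"
begin

lemma symE: "sym E" using sg unfolding simple_graph_def by blast
lemma irrE: "(x, x) \<notin> E" using sg unfolding simple_graph_def irrefl_def by blast

lemma dec_sub: "M \<in> dec_nodes V E \<Longrightarrow> M \<subseteq> V"
  by (induction rule: dec_nodes.induct) (use part_props[OF symE] in blast)+

lemma dec_fin: "M \<in> dec_nodes V E \<Longrightarrow> finite M"
  using dec_sub fin finite_subset by blast

lemma part_dec: "M \<in> dec_nodes V E \<Longrightarrow> Q \<in> mod_part E M \<Longrightarrow> Q \<in> dec_nodes V E \<and> Q \<noteq> V \<and> Q \<subset> M"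
proof -
  assume M: "M \<in> dec_nodes V E" and Q: "Q \<in> mod_part E M"
  have "Q \<subseteq> M" "Q \<noteq> M" using part_props[OF symE Q] by auto
  moreover have "M \<subseteq> V" using dec_sub[OF M] .
  ultimately show ?thesis using dec_nodes.sub[OF M Q] by blast
qed

lemma nv_MV: "M \<in> dec_nodes V E \<Longrightarrow> node_verts E M \<subseteq> mt_verts V E"
proof
  fix u assume M: "M \<in> dec_nodes V E" and u: "u \<in> node_verts E M"
  from nv_shape[OF u] show "u \<in> mt_verts V E"
  proof
    assume "\<exists>x\<in>M. u = Inl x \<and> mod_part E M = {}"
    then show ?thesis using dec_sub[OF M] unfolding mt_verts_def by blast
  next
    assume "\<exists>Q\<in>mod_part E M. u = Inr (Q, True)"
    then show ?thesis using part_dec[OF M] unfolding mt_verts_def by blast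
  qed
qed

lemma NE_MV: "(a, b) \<in> mt_normal_edges V E \<Longrightarrow> a \<in> mt_verts V E \<and> b \<in> mt_verts V E"
  unfolding NE_iff
  using ne_in_nv nv_MV unfolding mt_verts_def by blast

lemma TE_MV: "(a, b) \<in> mt_tree_edges V E \<Longrightarrow> a \<in> mt_verts V E \<and> b \<in> mt_verts V E"
  unfolding te_iff mt_verts_def by blast

lemma S_MV: "(a, b) \<in> Sst V E \<Longrightarrow> a \<in> mt_verts V E \<and> b \<in> mt_verts V E"
  unfolding Sst_def using NE_MV TE_MV by blast

lemma S_Inl: "(Inl x, b) \<notin> Sst V E"
  by (auto simp: Sst_def te_iff)

lemma S_True: "(Inr (Q, True), b) \<in> Sst V E \<longleftrightarrow> Q \<in> dec_nodes V E \<and> Q \<noteq> V \<and> b = Inr (Q, False)"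
  by (auto simp: Sst_def te_iff)

lemma S_False:
  assumes "P \<in> dec_nodes V E" "P \<noteq> V"
  shows "(Inr (P, False), b) \<in> Sst V E \<longleftrightarrow> b \<in> node_verts E P"
proof -
  have "(Inr (P, False), b) \<in> mt_normal_edges V E \<longleftrightarrow> b \<in> node_verts E P"
  proof
    assume "(Inr (P, False), b) \<in> mt_normal_edges V E"
    then obtain M where M: "M \<in> dec_nodes V E" "(Inr (P, False), b) \<in> node_edges E M \<or>
      (M \<noteq> V \<and> ((Inr (P, False) = Inr (M, False) \<and> b \<in> node_verts E M) \<or> (b = Inr (M, False) \<and> Inr (P, False) \<in> node_verts E M)))"
      unfolding NE_iff by blast
    then show "b \<in> node_verts E P" using ne_in_nv nv_not_False by blast
  next
    assume "b \<in> node_verts E P"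
    then show "(Inr (P, False), b) \<in> mt_normal_edges V E" unfolding NE_iff using assms by blast
  qed
  moreover have "\<exists>u. (u, Inr (P, False)) \<in> mt_tree_edges V E" using assms unfolding te_iff by blast
  ultimately show ?thesis by (auto simp: Sst_def te_iff)
qed

definition Desc :: "'a set \<Rightarrow> 'a tvert set" where
  "Desc P = {Inr (Q, c) | Q c. Q \<in> dec_nodes V E \<and> Q \<subseteq> P \<and> Q \<noteq> V} \<union> Inl ` P"

lemma reach_Desc:
  assumes "P \<in> dec_nodes V E" "P \<noteq> V" "(Inr (P, False), w) \<in> (Sst V E)\<^sup>*"
  shows "w \<in> Desc P"
  using assms(3)
proof (induction rule: rtrancl_induct)
  case base then show ?case using assms(1,2) unfolding Desc_def by blast
next
  case (step w w')
  from step.IH consider (i) Q c where "w = Inr (Q, c)" "Q \<in> dec_nodes V E" "Q \<subseteq> P" "Q \<noteq> V"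
    | (l) x where "w = Inl x" unfolding Desc_def by blast
  then show ?case
  proof cases
    case l then show ?thesis using step.hyps(2) S_Inl by simp
  next
    case i
    show ?thesis
    proof (cases c)
      case True
      then show ?thesis using step.hyps(2) i S_True unfolding Desc_def by auto
    next
      case False
      then have "w' \<in> node_verts E Q" using step.hyps(2) i S_False by simp
      from nv_shape[OF this] show ?thesis
      proof
        assume "\<exists>x\<in>Q. w' = Inl x \<and> mod_part E Q = {}"
        then show ?thesis using i unfolding Desc_def by blast
      next
        assume "\<exists>Q'\<in>mod_part E Q. w' = Inr (Q', True)"
        then obtain Q' where "Q' \<in> mod_part E Q" "w' = Inr (Q', True)" by blast
        with part_dec[OF i(2)] i show ?thesis unfolding Desc_def by blast
      qed
    qed
  qed
qed

lemma leaves_sub: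
  assumes "P \<in> dec_nodes V E" "P \<noteq> V" "(Inr (P, False), Inl v) \<in> (Sst V E)\<^sup>*"
  shows "v \<in> P"
  using reach_Desc[OF assms] unfolding Desc_def by blast

lemma leaves_sup:
  assumes "P \<in> dec_nodes V E" "P \<noteq> V" "v \<in> P"
  shows "(Inr (P, False), Inl v) \<in> (Sst V E)\<^sup>*"
proof -
  have "finite P" using dec_fin[OF assms(1)] .
  then show ?thesis using assms
  proof (induction P rule: finite_psubset_induct)
    case (psubset P)
    show ?case
    proof (cases "mod_part E P = {}")
      case True
      then have "Inl v \<in> node_verts E P" using psubset.prems(3) unfolding node_verts_def by simp
      then have "(Inr (P, False), Inl v) \<in> Sst V E" using S_False psubset.prems(1,2) by blast
      then show ?thesis by blast
    next
      case False
      obtain Q where Q: "Q \<in> mod_part E P" "v \<in> Q"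
        using part_cover[OF symE psubset.hyps(1) False psubset.prems(3)] by blast
      have Qd: "Q \<in> dec_nodes V E" "Q \<noteq> V" "Q \<subset> P" using part_dec[OF psubset.prems(1) Q(1)] by auto
      have IH: "(Inr (Q, False), Inl v) \<in> (Sst V E)\<^sup>*" using psubset.IH[OF Qd(3) Qd(1) Qd(2) Q(2)] .
      have "Inr (Q, True) \<in> node_verts E P" using False Q(1) unfolding node_verts_def by simp
      then have s1: "(Inr (P, False), Inr (Q, True)) \<in> Sst V E" using S_False psubset.prems(1,2) by blast
      have s2: "(Inr (Q, True), Inr (Q, False)) \<in> Sst V E" using S_True Qd by blast
      from s1 s2 IH show ?thesis by (meson converse_rtrancl_into_rtrancl)
    qed
  qed
qed

lemma leaves_iff:
  assumes "P \<in> dec_nodes V E" "P \<noteq> V"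
  shows "(Inr (P, False), Inl v) \<in> (Sst V E)\<^sup>* \<longleftrightarrow> v \<in> P"
  using leaves_sub[OF assms] leaves_sup[OF assms] by blast

lemma reps_not_False: "a \<in> reps V E x \<Longrightarrow> a \<noteq> Inr (Q, False)"
  unfolding reps_def by auto

lemma edge_reps1:
  assumes "a \<in> reps V E x" "b \<in> reps V E y" "(a, b) \<in> mt_normal_edges V E"
  shows "(x, y) \<in> E"
proof -
  obtain M where M: "M \<in> dec_nodes V E" "(a, b) \<in> node_edges E M"
    using assms(3) reps_not_False[OF assms(1)] reps_not_False[OF assms(2)] unfolding NE_iff by blast
  from ne_shape[OF M(2)] show ?thesis
  proof
    assume "\<exists>x y. a = Inl x \<and> b = Inl y \<and> x \<in> M \<and> y \<in> M \<and> (x, y) \<in> E \<and> mod_part E M = {}"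
    then show ?thesis using assms(1,2) unfolding reps_def by auto
  next
    assume "\<exists>P Q. a = Inr (P, True) \<and> b = Inr (Q, True) \<and> P \<in> mod_part E M \<and> Q \<in> mod_part E M \<and> P \<noteq> Q
       \<and> (\<forall>x\<in>P. \<forall>y\<in>Q. (x, y) \<in> E)"
    then show ?thesis using assms(1,2) unfolding reps_def by auto
  qed
qed

lemma edge_reps2:
  assumes "M \<in> dec_nodes V E" "x \<in> M" "y \<in> M" "(x, y) \<in> E"
  shows "\<exists>a\<in>reps V E x. \<exists>b\<in>reps V E y. (a, b) \<in> mt_normal_edges V E"
proof -
  have "finite M" using dec_fin[OF assms(1)] .
  then show ?thesis using assms
  proof (induction M rule: finite_psubset_induct)
    case (psubset M)
    show ?case
    proof (cases "mod_part E M = {}")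
      case True
      then have "(Inl x, Inl y) \<in> node_edges E M" using psubset.prems unfolding node_edges_def by simp
      then have "(Inl x, Inl y) \<in> mt_normal_edges V E" unfolding NE_iff using psubset.prems(1) by blast
      then show ?thesis unfolding reps_def by blast
    next
      case False
      obtain P where P: "P \<in> mod_part E M" "x \<in> P"
        using part_cover[OF symE psubset.hyps(1) False psubset.prems(2)] by blast
      obtain Q where Q: "Q \<in> mod_part E M" "y \<in> Q"
        using part_cover[OF symE psubset.hyps(1) False psubset.prems(3)] by blast
      have Pd: "P \<in> dec_nodes V E" "P \<noteq> V" "P \<subset> M" using part_dec[OF psubset.prems(1) P(1)] by auto
      have Qd: "Q \<in> dec_nodes V E" "Q \<noteq> V" "Q \<subset> M" using part_dec[OF psubset.prems(1) Q(1)] by auto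
      show ?thesis
      proof (cases "P = Q")
        case True
        then show ?thesis using psubset.IH[OF Pd(3) Pd(1) P(2)] Q(2) psubset.prems(4) by blast
      next
        case PQ: False
        have disj: "P \<inter> Q = {}" using part_disj[OF symE P(1) Q(1) PQ] .
        have mP: "is_module E M P" and mQ: "is_module E M Q" using part_props[OF symE] P(1) Q(1) by auto
        have yP: "y \<in> M - P" using disj Q(2) psubset.prems(3) by blast
        have "(y, x) \<in> E" using psubset.prems(4) symE unfolding sym_def by blast
        then have yall: "\<forall>p\<in>P. (y, p) \<in> E" using mP yP P(2) unfolding is_module_def by blast
        have all: "\<forall>p\<in>P. \<forall>q\<in>Q. (p, q) \<in> E"
        proof (intro ballI)
          fix p q assume p: "p \<in> P" and q: "q \<in> Q"
          have pQ: "p \<in> M - Q" using disj p Pd(3) by blast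
          have "(p, y) \<in> E" using yall p symE unfolding sym_def by blast
          then have "\<forall>q\<in>Q. (p, q) \<in> E" using mQ pQ Q(2) unfolding is_module_def by blast
          then show "(p, q) \<in> E" using q by blast
        qed
        have "(Inr (P, True), Inr (Q, True)) \<in> node_edges E M"
          using False P(1) Q(1) PQ all unfolding node_edges_def by auto
        then have "(Inr (P, True), Inr (Q, True)) \<in> mt_normal_edges V E"
          unfolding NE_iff using psubset.prems(1) by blast
        moreover have "Inr (P, True) \<in> reps V E x" "Inr (Q, True) \<in> reps V E y"
          unfolding reps_def using Pd Qd P Q by auto
        ultimately show ?thesis by blast
      qed
    qed
  qed
qed

lemma edge_iff:
  assumes "x \<in> V" "y \<in> V"
  shows "(x, y) \<in> E \<longleftrightarrow> (\<exists>a\<in>reps V E x. \<exists>b\<in>reps V E y. (a, b) \<in> mt_normal_edges V E)"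
  using edge_reps1 edge_reps2[OF dec_nodes.root assms] by blast

end

definition Phi :: "'a set \<Rightarrow> ('a \<times> 'a) set \<Rightarrow> ('a \<Rightarrow> 'a) \<Rightarrow> 'a tvert \<Rightarrow> 'a tvert" where
  "Phi V E f = (\<lambda>u. if u \<in> mt_verts V E then hmap f u else u)"

lemma aut_bij:
  assumes "f \<in> carrier (Aut_graph V E)"
  shows "bij f"
proof -
  have b: "bij_betw f V V" and o: "\<And>x. x \<notin> V \<Longrightarrow> f x = x"
    using assms unfolding Aut_graph_def by auto
  have "inj f"
  proof (rule injI)
    fix x y assume e: "f x = f y"
    show "x = y"
    proof (cases "x \<in> V"; cases "y \<in> V")
      assume "x \<in> V" "y \<in> V" then show ?thesis using e b unfolding bij_betw_def inj_on_def by blast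
    next
      assume "x \<in> V" "y \<notin> V" then show ?thesis using e o b unfolding bij_betw_def by force
    next
      assume "x \<notin> V" "y \<in> V" then show ?thesis using e o b unfolding bij_betw_def by force
    next
      assume "x \<notin> V" "y \<notin> V" then show ?thesis using e o by simp
    qed
  qed
  moreover have "surj f"
  proof -
    have "y \<in> range f" for y
    proof (cases "y \<in> V")
      case True then show ?thesis using b unfolding bij_betw_def by blast
    next
      case False then show ?thesis using o[OF False] by (metis rangeI)
    qed
    then show ?thesis by blast
  qed
  ultimately show ?thesis by (simp add: bij_def)
qed

lemma aut_E:
  assumes "f \<in> carrier (Aut_graph V E)" "simple_graph V E"
  shows "map_prod f f ` E = E"
proof -
  have b: "bij_betw f V V" and e: "\<And>x y. x \<in> V \<Longrightarrow> y \<in> V \<Longrightarrow> (x, y) \<in> E \<longleftrightarrow> (f x, f y) \<in> E"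
    using assms(1) unfolding Aut_graph_def by auto
  have EV: "E \<subseteq> V \<times> V" using assms(2) unfolding simple_graph_def by blast
  show ?thesis
  proof (rule Set.set_eqI, rule iffI)
    fix p assume "p \<in> map_prod f f ` E"
    then obtain x y where xy: "(x, y) \<in> E" "p = (f x, f y)" by auto
    then have "x \<in> V" "y \<in> V" using EV by auto
    then show "p \<in> E" using e xy by simp
  next
    fix p assume p: "p \<in> E"
    then obtain x y where xy: "p = (x, y)" "x \<in> V" "y \<in> V" using EV by blast
    have fV: "f ` V = V" using b by (simp add: bij_betw_def)
    obtain x' where x': "x' \<in> V" "f x' = x" using xy(2) fV by (metis imageE)
    obtain y' where y': "y' \<in> V" "f y' = y" using xy(3) fV by (metis imageE)
    have "(x', y') \<in> E" using e[OF x'(1) y'(1)] p xy x' y' by simp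
    then have "map_prod f f (x', y') \<in> map_prod f f ` E" by (rule imageI)
    then show "p \<in> map_prod f f ` E" using xy x' y' by simp
  qed
qed

lemma aut_V: "f \<in> carrier (Aut_graph V E) \<Longrightarrow> f ` V = V"
  unfolding Aut_graph_def bij_betw_def by auto

lemma isl_hmap: "isl (hmap f u) = isl u"
  by (cases u) auto

context
  fixes V :: "'a set" and E :: "('a \<times> 'a) set"
  assumes fin: "finite V" and sg: "simple_graph V E"
begin

lemma transp_all:
  assumes "f \<in> carrier (Aut_graph V E)"
  shows "hmap f ` mt_verts V E = mt_verts V E"
    "map_prod (hmap f) (hmap f) ` mt_normal_edges V E = mt_normal_edges V E"
    "map_prod (hmap f) (hmap f) ` mt_tree_edges V E = mt_tree_edges V E"
    "inj (hmap f)"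
proof -
  have bf: "bij f" using aut_bij[OF assms] .
  note eqs = aut_E[OF assms sg] aut_V[OF assms]
  show "hmap f ` mt_verts V E = mt_verts V E" using verts_transp[OF bf, where E=E and V=V] eqs by simp
  show "map_prod (hmap f) (hmap f) ` mt_normal_edges V E = mt_normal_edges V E"
    using normal_transp[OF bf, where E=E and V=V] eqs by simp
  show "map_prod (hmap f) (hmap f) ` mt_tree_edges V E = mt_tree_edges V E"
    using tree_transp[OF bf, where E=E and V=V] eqs by simp
  show "inj (hmap f)" using hmap_inj bf bij_is_inj by blast
qed

lemma Phi_carrier:
  assumes "f \<in> carrier (Aut_graph V E)"
  shows "Phi V E f \<in> carrier (Aut_mtree V E)"
proof -
  note t = transp_all[OF assms]
  let ?h = "hmap f" and ?MV = "mt_verts V E"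
  have bh: "bij_betw ?h ?MV ?MV" using t(1) inj_on_subset[OF t(4) subset_UNIV] by (simp add: bij_betw_def)
  have b: "bij_betw (Phi V E f) ?MV ?MV"
    using bh by (rule bij_betw_cong[THEN iffD1, rotated]) (simp add: Phi_def)
  have im: "?h u \<in> ?MV" if "u \<in> ?MV" for u using t(1) that by blast
  have ipm: "inj (map_prod ?h ?h)" using t(4) by (rule prod.inj_map[OF _ t(4)])
  have ne: "(u, w) \<in> mt_normal_edges V E \<longleftrightarrow> (?h u, ?h w) \<in> mt_normal_edges V E" for u w
  proof -
    have "(?h u, ?h w) \<in> mt_normal_edges V E \<longleftrightarrow> map_prod ?h ?h (u, w) \<in> map_prod ?h ?h ` mt_normal_edges V E"
      using t(2) by simp
    also have "\<dots> \<longleftrightarrow> (u, w) \<in> mt_normal_edges V E" by (rule inj_image_mem_iff[OF ipm])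
    finally show ?thesis by simp
  qed
  have te: "(u, w) \<in> mt_tree_edges V E \<longleftrightarrow> (?h u, ?h w) \<in> mt_tree_edges V E" for u w
  proof -
    have "(?h u, ?h w) \<in> mt_tree_edges V E \<longleftrightarrow> map_prod ?h ?h (u, w) \<in> map_prod ?h ?h ` mt_tree_edges V E"
      using t(3) by simp
    also have "\<dots> \<longleftrightarrow> (u, w) \<in> mt_tree_edges V E" by (rule inj_image_mem_iff[OF ipm])
    finally show ?thesis by simp
  qed
  have P: "\<And>u. u \<in> ?MV \<Longrightarrow> Phi V E f u = ?h u" "\<And>u. u \<notin> ?MV \<Longrightarrow> Phi V E f u = u"
    by (simp_all add: Phi_def)
  have i: "\<forall>u\<in>?MV. isl (Phi V E f u) \<longleftrightarrow> isl u"
  proof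
    fix u assume u: "u \<in> ?MV"
    have "isl (hmap f u) = isl u" by (rule isl_hmap)
    then show "isl (Phi V E f u) \<longleftrightarrow> isl u" using P(1)[OF u] by simp
  qed
  have e: "\<forall>u\<in>?MV. \<forall>w\<in>?MV.
            ((u, w) \<in> mt_normal_edges V E \<longleftrightarrow> (Phi V E f u, Phi V E f w) \<in> mt_normal_edges V E) \<and>
            ((u, w) \<in> mt_tree_edges V E \<longleftrightarrow> (Phi V E f u, Phi V E f w) \<in> mt_tree_edges V E)"
    using P(1) ne te by simp
  show ?thesis unfolding Aut_mtree_def using b i e P(2) by simp
qed

lemma hmap_comp: "hmap (f \<circ> g) u = hmap f (hmap g u)"
  by (cases u) (auto simp: image_comp)

lemma Phi_comp:
  assumes "f \<in> carrier (Aut_graph V E)" "g \<in> carrier (Aut_graph V E)"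
  shows "Phi V E (f \<circ> g) = Phi V E f \<circ> Phi V E g"
proof
  fix u
  show "Phi V E (f \<circ> g) u = (Phi V E f \<circ> Phi V E g) u"
  proof (cases "u \<in> mt_verts V E")
    case True
    then have "hmap g u \<in> mt_verts V E" using transp_all(1)[OF assms(2)] by blast
    then show ?thesis using True by (simp add: Phi_def hmap_comp)
  next
    case False
    then show ?thesis by (simp add: Phi_def)
  qed
qed

lemma Phi_inj:
  assumes "f \<in> carrier (Aut_graph V E)" "g \<in> carrier (Aut_graph V E)" "Phi V E f = Phi V E g"
  shows "f = g"
proof
  fix v show "f v = g v"
  proof (cases "v \<in> V")
    case True
    then have "Inl v \<in> mt_verts V E" unfolding mt_verts_def by blast
    then have "Phi V E f (Inl v) = Inl (f v)" "Phi V E g (Inl v) = Inl (g v)" by (simp_all add: Phi_def)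
    then show ?thesis using assms(3) by simp
  next
    case False
    then show ?thesis using assms(1,2) unfolding Aut_graph_def by simp
  qed
qed

lemma Inl_MV: "Inl w \<in> mt_verts V E \<longleftrightarrow> w \<in> V"
  unfolding mt_verts_def by blast

lemma Inr_MV: "Inr (P, c) \<in> mt_verts V E \<longleftrightarrow> P \<in> dec_nodes V E \<and> P \<noteq> V"
  unfolding mt_verts_def by blast

lemma Phi_surj:
  assumes F: "F \<in> carrier (Aut_mtree V E)"
  shows "\<exists>f\<in>carrier (Aut_graph V E). Phi V E f = F"
proof -
  let ?MV = "mt_verts V E" and ?S = "Sst V E" and ?NE = "mt_normal_edges V E" and ?TE = "mt_tree_edges V E"
  have bF: "bij_betw F ?MV ?MV" and oF: "\<And>x. x \<notin> ?MV \<Longrightarrow> F x = x"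
    and iF: "\<And>u. u \<in> ?MV \<Longrightarrow> isl (F u) \<longleftrightarrow> isl u"
    and eN: "\<And>u w. u \<in> ?MV \<Longrightarrow> w \<in> ?MV \<Longrightarrow> (u, w) \<in> ?NE \<longleftrightarrow> (F u, F w) \<in> ?NE"
    and eT: "\<And>u w. u \<in> ?MV \<Longrightarrow> w \<in> ?MV \<Longrightarrow> (u, w) \<in> ?TE \<longleftrightarrow> (F u, F w) \<in> ?TE"
  proof -
    have c: "bij_betw F ?MV ?MV \<and> (\<forall>x. x \<notin> ?MV \<longrightarrow> F x = x) \<and> (\<forall>u\<in>?MV. isl (F u) \<longleftrightarrow> isl u) \<and>
        (\<forall>u\<in>?MV. \<forall>w\<in>?MV. ((u, w) \<in> ?NE \<longleftrightarrow> (F u, F w) \<in> ?NE) \<and> ((u, w) \<in> ?TE \<longleftrightarrow> (F u, F w) \<in> ?TE))"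
      using F unfolding Aut_mtree_def by simp
    then show "bij_betw F ?MV ?MV" "\<And>x. x \<notin> ?MV \<Longrightarrow> F x = x"
      "\<And>u. u \<in> ?MV \<Longrightarrow> isl (F u) \<longleftrightarrow> isl u"
      "\<And>u w. u \<in> ?MV \<Longrightarrow> w \<in> ?MV \<Longrightarrow> (u, w) \<in> ?NE \<longleftrightarrow> (F u, F w) \<in> ?NE"
      "\<And>u w. u \<in> ?MV \<Longrightarrow> w \<in> ?MV \<Longrightarrow> (u, w) \<in> ?TE \<longleftrightarrow> (F u, F w) \<in> ?TE"
      by blast+
  qed
  have FMV: "\<And>u. u \<in> ?MV \<Longrightarrow> F u \<in> ?MV" using bij_betwE[OF bF] by blast
  have Finj: "inj_on F ?MV" using bF by (simp add: bij_betw_def)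
  have Fim: "F ` ?MV = ?MV" using bF by (simp add: bij_betw_def)
  have Fsurj: "\<And>w. w \<in> ?MV \<Longrightarrow> \<exists>u\<in>?MV. w = F u" using Fim by blast
  have inTE: "(\<exists>u. (u, a) \<in> ?TE) \<longleftrightarrow> (\<exists>u. (u, F a) \<in> ?TE)" if a: "a \<in> ?MV" for a
  proof
    assume "\<exists>u. (u, a) \<in> ?TE"
    then obtain u where u: "(u, a) \<in> ?TE" by blast
    then have "u \<in> ?MV" using TE_MV[OF fin sg] by blast
    then have "(F u, F a) \<in> ?TE" using eT[OF \<open>u \<in> ?MV\<close> a] u by blast
    then show "\<exists>u. (u, F a) \<in> ?TE" by blast
  next
    assume "\<exists>u. (u, F a) \<in> ?TE"
    then obtain u' where u': "(u', F a) \<in> ?TE" by blast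
    then have "u' \<in> ?MV" using TE_MV[OF fin sg] by blast
    then obtain u where u: "u \<in> ?MV" "u' = F u" using Fsurj by blast
    then have "(u, a) \<in> ?TE" using eT[OF u(1) a] u' by blast
    then show "\<exists>u. (u, a) \<in> ?TE" by blast
  qed
  have SS: "(a, b) \<in> ?S \<longleftrightarrow> (F a, F b) \<in> ?S" if "a \<in> ?MV" "b \<in> ?MV" for a b
    unfolding Sst_def using eN[OF that] eT[OF that] inTE[OF that(1)] by blast
  have Sfw: "(F a, F b) \<in> ?S\<^sup>* \<and> b \<in> ?MV" if "(a, b) \<in> ?S\<^sup>*" "a \<in> ?MV" for a b
    using that(1)
  proof (induction rule: rtrancl_induct)
    case base then show ?case using that(2) by simp
  next
    case (step y z)
    then have yz: "y \<in> ?MV" "z \<in> ?MV" using S_MV[OF fin sg] by auto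
    then have "(F y, F z) \<in> ?S" using SS step.hyps(2) by blast
    then show ?case using step.IH yz by (meson rtrancl.rtrancl_into_rtrancl)
  qed
  have Sbw: "\<exists>b\<in>?MV. d = F b \<and> (a, b) \<in> ?S\<^sup>*" if "(F a, d) \<in> ?S\<^sup>*" "a \<in> ?MV" for a d
    using that(1)
  proof (induction rule: rtrancl_induct)
    case base then show ?case using that(2) by blast
  next
    case (step y z)
    then obtain b where b: "b \<in> ?MV" "y = F b" "(a, b) \<in> ?S\<^sup>*" by blast
    have "z \<in> ?MV" using step.hyps(2) S_MV[OF fin sg] by blast
    then obtain b' where b': "b' \<in> ?MV" "z = F b'" using Fsurj by blast
    then have "(b, b') \<in> ?S" using SS[OF b(1) b'(1)] step.hyps(2) b(2) by simp
    then have "(a, b') \<in> ?S\<^sup>*" using b(3) by (rule rtrancl_into_rtrancl[rotated])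
    then show ?case using b' by blast
  qed
  define f where "f = (\<lambda>v. if v \<in> V then projl (F (Inl v)) else v)"
  have fInl: "F (Inl v) = Inl (f v) \<and> f v \<in> V" if v: "v \<in> V" for v
  proof -
    have m: "Inl v \<in> ?MV" using v Inl_MV by blast
    then have "isl (F (Inl v))" using iF by simp
    then obtain w where w: "F (Inl v) = Inl w" by (cases "F (Inl v)") auto
    then have "w \<in> V" using FMV[OF m] Inl_MV by simp
    moreover have "f v = w" using w v unfolding f_def by simp
    ultimately show ?thesis using w by simp
  qed
  have fout: "f x = x" if "x \<notin> V" for x using that unfolding f_def by simp
  have finj: "inj_on f V"
  proof (rule inj_onI)
    fix x y assume "x \<in> V" "y \<in> V" "f x = f y"
    then have "F (Inl x) = F (Inl y)" using fInl by simp
    moreover have "Inl x \<in> ?MV" "Inl y \<in> ?MV" using \<open>x \<in> V\<close> \<open>y \<in> V\<close> Inl_MV by auto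
    ultimately show "x = y" using Finj unfolding inj_on_def by blast
  qed
  have fim: "f ` V = V"
  proof (rule Set.set_eqI, rule iffI)
    fix w assume "w \<in> f ` V" then show "w \<in> V" using fInl by blast
  next
    fix w assume w: "w \<in> V"
    then have "Inl w \<in> ?MV" using Inl_MV by blast
    then obtain u where u: "u \<in> ?MV" "Inl w = F u" using Fsurj by blast
    then have "isl u" using iF[OF u(1)] by (metis sum.disc(1))
    then obtain v where v: "u = Inl v" by (cases u) auto
    then have vV: "v \<in> V" using u Inl_MV by simp
    then have "w = f v" using fInl u v by simp
    then show "w \<in> f ` V" using vV by blast
  qed
  have fbij: "bij_betw f V V" using finj fim by (simp add: bij_betw_def)
  have FInr: "F (Inr (P, True)) = Inr (f ` P, True) \<and> F (Inr (P, False)) = Inr (f ` P, False)"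
    if P: "P \<in> dec_nodes V E" "P \<noteq> V" for P
  proof -
    have m: "Inr (P, True) \<in> ?MV" "Inr (P, False) \<in> ?MV" using P Inr_MV by auto
    have "(Inr (P, True), Inr (P, False)) \<in> ?TE" using P unfolding te_iff by blast
    then have "(F (Inr (P, True)), F (Inr (P, False))) \<in> ?TE" using eT[OF m] by blast
    then have "\<exists>Q. Q \<in> dec_nodes V E \<and> Q \<noteq> V \<and> F (Inr (P, True)) = Inr (Q, True) \<and>
      F (Inr (P, False)) = Inr (Q, False)" by (simp only: te_iff)
    then obtain Q where Q: "Q \<in> dec_nodes V E" "Q \<noteq> V" "F (Inr (P, True)) = Inr (Q, True)"
      "F (Inr (P, False)) = Inr (Q, False)" by blast
    have "Q = f ` P"
    proof (rule Set.set_eqI, rule iffI)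
      fix w assume w: "w \<in> Q"
      then have "(Inr (Q, False), Inl w) \<in> ?S\<^sup>*" by (rule leaves_sup[OF fin sg Q(1,2)])
      then have "(F (Inr (P, False)), Inl w) \<in> ?S\<^sup>*" using Q(4) by simp
      from Sbw[OF this m(2)] obtain b where b: "b \<in> ?MV" "Inl w = F b" "(Inr (P, False), b) \<in> ?S\<^sup>*"
        by blast
      then have "isl b" using iF[OF b(1)] b(2) by (metis sum.disc(1))
      then obtain v where v: "b = Inl v" by (cases b) auto
      then have "v \<in> V" using b Inl_MV by simp
      have "v \<in> P" using leaves_sub[OF fin sg P] b v by simp
      moreover have "w = f v" using fInl[OF \<open>v \<in> V\<close>] b v by simp
      ultimately show "w \<in> f ` P" by blast
    next
      fix w assume "w \<in> f ` P"
      then obtain v where v: "v \<in> P" "w = f v" by blast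
      have vV: "v \<in> V" using v dec_sub[OF fin sg P(1)] by blast
      have "(Inr (P, False), Inl v) \<in> ?S\<^sup>*" using leaves_sup[OF fin sg P v(1)] .
      then have "(F (Inr (P, False)), F (Inl v)) \<in> ?S\<^sup>*" using Sfw[OF _ m(2)] by blast
      then have "(Inr (Q, False), Inl w) \<in> ?S\<^sup>*" using Q(4) fInl[OF vV] v(2) by simp
      then show "w \<in> Q" by (rule leaves_sub[OF fin sg Q(1,2)])
    qed
    then show ?thesis using Q by simp
  qed
  have Fh: "F u = hmap f u" if u: "u \<in> ?MV" for u
  proof (cases u)
    case (Inl v)
    then show ?thesis using fInl u Inl_MV by simp
  next
    case (Inr p)
    then obtain P c where p: "u = Inr (P, c)" by (cases p) auto
    then have "P \<in> dec_nodes V E" "P \<noteq> V" using u Inr_MV by auto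
    then show ?thesis using FInr p by (cases c) auto
  qed
  have PhiF: "Phi V E f = F"
  proof
    fix u show "Phi V E f u = F u" using Fh oF by (simp add: Phi_def)
  qed
  have reps_MV: "reps V E x \<subseteq> ?MV" if "x \<in> V" for x
    using that unfolding reps_def mt_verts_def by blast
  have reps_img: "F ` reps V E x = reps V E (f x)" if x: "x \<in> V" for x
  proof (rule Set.set_eqI, rule iffI)
    fix b assume "b \<in> F ` reps V E x"
    then obtain a where a: "a \<in> reps V E x" "b = F a" by blast
    show "b \<in> reps V E (f x)"
    proof (cases "a = Inl x")
      case True then show ?thesis using a fInl[OF x] unfolding reps_def by simp
    next
      case False
      then obtain Q where Q: "a = Inr (Q, True)" "Q \<in> dec_nodes V E" "Q \<noteq> V" "x \<in> Q"
        using a(1) unfolding reps_def by blast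
      have "b = Inr (f ` Q, True)" using FInr[OF Q(2,3)] a Q by simp
      moreover have "b \<in> ?MV" using FMV reps_MV[OF x] a by blast
      ultimately have "f ` Q \<in> dec_nodes V E" "f ` Q \<noteq> V" using Inr_MV by auto
      then show ?thesis using \<open>b = Inr (f ` Q, True)\<close> Q(4) unfolding reps_def by blast
    qed
  next
    fix b assume b: "b \<in> reps V E (f x)"
    show "b \<in> F ` reps V E x"
    proof (cases "b = Inl (f x)")
      case True
      then show ?thesis using fInl[OF x] unfolding reps_def by force
    next
      case False
      then obtain Q' where Q': "b = Inr (Q', True)" "Q' \<in> dec_nodes V E" "Q' \<noteq> V" "f x \<in> Q'"
        using b unfolding reps_def by blast
      then have "b \<in> ?MV" using Inr_MV by simp
      then obtain a where a: "a \<in> ?MV" "b = F a" using Fsurj by blast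
      have "F a = Inr (Q', True)" using a(2) Q'(1) by simp
      then have "\<not> isl (F a)" by simp
      then have "\<not> isl a" using iF[OF a(1)] by simp
      then obtain Q c where ac: "a = Inr (Q, c)" by (cases a) auto
      then have Qd: "Q \<in> dec_nodes V E" "Q \<noteq> V" using a Inr_MV by auto
      have "F a = Inr (f ` Q, c)" using FInr[OF Qd] ac by (cases c) auto
      then have "c = True" "Q' = f ` Q" using a(2) Q'(1) by auto
      moreover have "x \<in> Q"
      proof -
        have "f x \<in> f ` Q" using Q'(4) \<open>Q' = f ` Q\<close> by simp
        moreover have "Q \<subseteq> V" using dec_sub[OF fin sg Qd(1)] .
        ultimately show ?thesis using finj x by (auto simp: inj_on_image_mem_iff)
      qed
      ultimately have "a \<in> reps V E x" using ac Qd unfolding reps_def by blast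
      then show ?thesis using a(2) by blast
    qed
  qed
  have edges: "(x, y) \<in> E \<longleftrightarrow> (f x, f y) \<in> E" if xy: "x \<in> V" "y \<in> V" for x y
  proof -
    have fxy: "f x \<in> V" "f y \<in> V" using fInl xy by auto
    have "(x, y) \<in> E \<longleftrightarrow> (\<exists>a\<in>reps V E x. \<exists>b\<in>reps V E y. (a, b) \<in> ?NE)"
      using edge_iff[OF fin sg xy] .
    also have "\<dots> \<longleftrightarrow> (\<exists>a\<in>reps V E x. \<exists>b\<in>reps V E y. (F a, F b) \<in> ?NE)"
      using eN reps_MV[OF xy(1)] reps_MV[OF xy(2)] by blast
    also have "\<dots> \<longleftrightarrow> (\<exists>a\<in>F ` reps V E x. \<exists>b\<in>F ` reps V E y. (a, b) \<in> ?NE)"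
      by blast
    also have "\<dots> \<longleftrightarrow> (\<exists>a\<in>reps V E (f x). \<exists>b\<in>reps V E (f y). (a, b) \<in> ?NE)"
      using reps_img xy by simp
    also have "\<dots> \<longleftrightarrow> (f x, f y) \<in> E"
      using edge_iff[OF fin sg fxy] by simp
    finally show ?thesis .
  qed
  have "f \<in> carrier (Aut_graph V E)"
    unfolding Aut_graph_def using fbij fout edges by simp
  then show ?thesis using PhiF by blast
qed

end

theorem mainTheorem2:
  fixes V :: "'a set" and E :: "('a \<times> 'a) set"
  assumes "finite V" and "simple_graph V E"
  shows "Aut_graph V E \<cong> Aut_mtree V E"
proof -
  have hom: "Phi V E \<in> hom (Aut_graph V E) (Aut_mtree V E)"
    unfolding hom_def
  proof (intro CollectI conjI ballI)
    show "Phi V E \<in> carrier (Aut_graph V E) \<rightarrow> carrier (Aut_mtree V E)"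
      using Phi_carrier[OF assms] by blast
    fix f g assume "f \<in> carrier (Aut_graph V E)" "g \<in> carrier (Aut_graph V E)"
    then show "Phi V E (f \<otimes>\<^bsub>Aut_graph V E\<^esub> g) = Phi V E f \<otimes>\<^bsub>Aut_mtree V E\<^esub> Phi V E g"
      using Phi_comp[OF assms] by (simp add: Aut_graph_def Aut_mtree_def)
  qed
  have bij: "bij_betw (Phi V E) (carrier (Aut_graph V E)) (carrier (Aut_mtree V E))"
    unfolding bij_betw_def
  proof
    show "inj_on (Phi V E) (carrier (Aut_graph V E))"
      using Phi_inj[OF assms] by (meson inj_onI)
    show "Phi V E ` carrier (Aut_graph V E) = carrier (Aut_mtree V E)"
      using Phi_carrier[OF assms] Phi_surj[OF assms] by blast
  qed
  show ?thesis using hom bij by (intro is_isoI isoI)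
qed


end
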